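(* Let $n\in\mathbb N$, let $c_i=B(f^{(i)})$, $i=1,\dots,n$, be fermions in $\mathcal A_n$ (i.e. $\{c_i,c_j\}=0$, $\{c_i^*,c_j\}=\delta_{ij}$), and define $e^{(i)}_{11}=c_i^*c_i$, $e^{(i)}_{12}=c_i^*$, $e^{(i)}_{21}=c_i$, $e^{(i)}_{22}=c_ic_i^*$. Then the $2^{2n}$ operators $\prod_{i=1}^ne^{(i)}_{\alpha_i\beta_i}$, $\alpha_1,\beta_1,\dots,\alpha_n,\beta_n\in\{1,2\}$, form an orthonormal basis of $\mathcal A_n$ equipped with the scalar product $(A,B)\mapsto\operatorname{tr}(A^*B)$.
   Context: $\mathcal A_n$ is the CAR algebra generated by $b_1,\dots,b_n$ ($\{b_x,b_y\}=0$, $\{b_x^*,b_y\}=\delta_{xy}$), identified with the algebra of all linear operators on the $2^n$-dimensional Fock space $\mathfrak F(\mathbb C^n)$; $\operatorname{tr}$ is the trace on $\mathfrak F(\mathbb C^n)$. For $f=(f_+,f_-)\in\mathbb C^n\oplus\mathbb C^n$, $B(f)=\sum_{x=1}^n(f_+(x)b_x^*+f_-(x)b_x)$. Products $\prod_{i=1}^n$ are ordered with $i=1$ leftmost. *)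

theory Defs
  imports Complex_Main "HOL-Library.FuncSet"
begin

(* Fock space F(C^n): orthonormal basis |S>, S a subset of {1..n} (occupied modes).
   An operator is given by its matrix entries  A S T = <S|A|T>;  the algebra A_n
   consists of the operators whose entries vanish outside Pow {1..n} x Pow {1..n}. *)

type_synonym op = "nat set \<Rightarrow> nat set \<Rightarrow> complex"

definition is_op :: "nat \<Rightarrow> op \<Rightarrow> bool" where
  "is_op n A \<longleftrightarrow> (\<forall>S T. A S T \<noteq> 0 \<longrightarrow> S \<subseteq> {1..n} \<and> T \<subseteq> {1..n})"

definition op_mult :: "nat \<Rightarrow> op \<Rightarrow> op \<Rightarrow> op" where
  "op_mult n A B = (\<lambda>S T. \<Sum>U\<in>Pow {1..n}. A S U * B U T)"

definition op_adj :: "op \<Rightarrow> op" where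
  "op_adj A = (\<lambda>S T. cnj (A T S))"

definition op_id :: "nat \<Rightarrow> op" where
  "op_id n = (\<lambda>S T. if S = T \<and> S \<subseteq> {1..n} then 1 else 0)"

definition op_zero :: op where
  "op_zero = (\<lambda>S T. 0)"

definition anticomm :: "nat \<Rightarrow> op \<Rightarrow> op \<Rightarrow> op" where
  "anticomm n A B = (\<lambda>S T. op_mult n A B S T + op_mult n B A S T)"

definition tr :: "nat \<Rightarrow> op \<Rightarrow> complex" where
  "tr n A = (\<Sum>S\<in>Pow {1..n}. A S S)"

(* annihilation operator b_x (Jordan-Wigner sign convention):
   b_x |T> = (-1)^{#{y in T. y < x}} |T - {x}>  if x in T, and 0 otherwise *)
definition ann :: "nat \<Rightarrow> nat \<Rightarrow> op" where
  "ann n x = (\<lambda>S T. if T \<subseteq> {1..n} \<and> x \<in> T \<and> S = T - {x}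
                     then (-1) ^ card {y\<in>T. y < x} else 0)"

definition Bf :: "nat \<Rightarrow> (nat \<Rightarrow> complex) \<times> (nat \<Rightarrow> complex) \<Rightarrow> op" where
  "Bf n f = (\<lambda>S T. \<Sum>x\<in>{1..n}. fst f x * op_adj (ann n x) S T + snd f x * ann n x S T)"

definition e_unit :: "nat \<Rightarrow> op \<Rightarrow> nat \<Rightarrow> nat \<Rightarrow> op" where
  "e_unit n c a b =
     (if a = 1 \<and> b = 1 then op_mult n (op_adj c) c
      else if a = 1 \<and> b = 2 then op_adj c
      else if a = 2 \<and> b = 1 then c
      else op_mult n c (op_adj c))"

fun op_prod :: "nat \<Rightarrow> (nat \<Rightarrow> op) \<Rightarrow> nat \<Rightarrow> op" where
  "op_prod n F 0 = op_id n"
| "op_prod n F (Suc k) = op_mult n (op_prod n F k) (F (Suc k))"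

end

theory Submission
  imports Defs "Jordan_Normal_Form.Determinant"
begin


lemma mult_assoc: "op_mult n (op_mult n A B) C = op_mult n A (op_mult n B C)"
  unfolding op_mult_def by (auto simp: sum_distrib_left sum_distrib_right mult.assoc intro!: ext sum.swap[THEN trans])

lemma adj_mult: "op_adj (op_mult n A B) = op_mult n (op_adj B) (op_adj A)"
  unfolding op_mult_def op_adj_def by (auto simp: mult.commute intro!: ext)

lemma adj_adj[simp]: "op_adj (op_adj A) = A"
  unfolding op_adj_def by auto

lemma mult_id_left: assumes "is_op n A" shows "op_mult n (op_id n) A = A"
proof (intro ext)
  fix S T
  have "op_mult n (op_id n) A S T = (\<Sum>U\<in>Pow {1..n}. if U = S then (if S \<subseteq> {1..n} then A S T else 0) else 0)"
    unfolding op_mult_def op_id_def by (rule sum.cong) auto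
  also have "\<dots> = (if S \<subseteq> {1..n} then A S T else 0)" by (simp add: sum.delta)
  also have "\<dots> = A S T" using assms unfolding is_op_def by auto
  finally show "op_mult n (op_id n) A S T = A S T" .
qed

lemma mult_id_right: assumes "is_op n A" shows "op_mult n A (op_id n) = A"
proof (intro ext)
  fix S T
  have "op_mult n A (op_id n) S T = (\<Sum>U\<in>Pow {1..n}. if U = T then (if T \<subseteq> {1..n} then A S T else 0) else 0)"
    unfolding op_mult_def op_id_def by (rule sum.cong) auto
  also have "\<dots> = (if T \<subseteq> {1..n} then A S T else 0)" by (simp add: sum.delta)
  also have "\<dots> = A S T" using assms unfolding is_op_def by auto
  finally show "op_mult n A (op_id n) S T = A S T" .
qed

lemma tr_comm: "tr n (op_mult n A B) = tr n (op_mult n B A)"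
  unfolding tr_def op_mult_def by (rule sum.swap[THEN trans]) (simp add: mult.commute)

lemma is_op_mult: "is_op n A \<Longrightarrow> is_op n B \<Longrightarrow> is_op n (op_mult n A B)"
  unfolding is_op_def op_mult_def by (metis (no_types, lifting) mult_not_zero sum.neutral)

lemma is_op_adj: "is_op n A \<Longrightarrow> is_op n (op_adj A)"
  unfolding is_op_def op_adj_def by auto

lemma is_op_id: "is_op n (op_id n)"
  unfolding is_op_def op_id_def by auto

lemma is_op_zero: "is_op n op_zero"
  unfolding is_op_def op_zero_def by auto

lemma mult_zero_left[simp]: "op_mult n op_zero A = op_zero"
  unfolding op_mult_def op_zero_def by auto

lemma mult_zero_right[simp]: "op_mult n A op_zero = op_zero"
  unfolding op_mult_def op_zero_def by auto

lemma adj_zero[simp]: "op_adj op_zero = op_zero"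
  unfolding op_adj_def op_zero_def by auto

lemma adj_id[simp]: "op_adj (op_id n) = op_id n"
  unfolding op_adj_def op_id_def by (auto intro!: ext)

lemma mult_neg_left: "op_mult n (\<lambda>S T. - A S T) B = (\<lambda>S T. - op_mult n A B S T)"
  unfolding op_mult_def by (auto simp: sum_negf)

lemma mult_neg_right: "op_mult n A (\<lambda>S T. - B S T) = (\<lambda>S T. - op_mult n A B S T)"
  unfolding op_mult_def by (auto simp: sum_negf)

lemma adj_neg: "op_adj (\<lambda>S T. - A S T) = (\<lambda>S T. - op_adj A S T)"
  unfolding op_adj_def by auto

lemma mult_diff_left: "op_mult n (\<lambda>S T. A S T - B S T) C = (\<lambda>S T. op_mult n A C S T - op_mult n B C S T)"
  unfolding op_mult_def by (auto simp: sum_subtractf algebra_simps)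

lemma mult_diff_right: "op_mult n C (\<lambda>S T. A S T - B S T) = (\<lambda>S T. op_mult n C A S T - op_mult n C B S T)"
  unfolding op_mult_def by (auto simp: sum_subtractf algebra_simps)

lemma mult_add_right: "op_mult n C (\<lambda>S T. A S T + B S T) = (\<lambda>S T. op_mult n C A S T + op_mult n C B S T)"
  unfolding op_mult_def by (auto simp: sum.distrib algebra_simps)

lemma tr_add: "tr n (\<lambda>S T. A S T + B S T) = tr n A + tr n B"
  unfolding tr_def by (simp add: sum.distrib)

lemma tr_zero[simp]: "tr n op_zero = 0"
  unfolding tr_def op_zero_def by simp

lemma tr_id: "tr n (op_id n) = 2 ^ n"
  unfolding tr_def op_id_def by (simp add: card_Pow)

lemma is_op_ann: "is_op n (ann n x)"
  unfolding is_op_def ann_def by auto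

lemma is_op_Bf: "is_op n (Bf n f)"
proof -
  have "\<And>x. is_op n (ann n x)" "\<And>x. is_op n (op_adj (ann n x))" by (simp_all add: is_op_ann is_op_adj)
  then show ?thesis unfolding is_op_def Bf_def
    by (smt (verit, best) mult_eq_0_iff sum.neutral add.right_neutral)
qed

definition comm :: "nat \<Rightarrow> op \<Rightarrow> op \<Rightarrow> bool" where
  "comm n A B \<longleftrightarrow> op_mult n A B = op_mult n B A"

lemma comm_mult: "comm n E X \<Longrightarrow> comm n E Y \<Longrightarrow> comm n E (op_mult n X Y)"
  unfolding comm_def by (metis mult_assoc)

lemma comm_mult2: "comm n X E \<Longrightarrow> comm n Y E \<Longrightarrow> comm n (op_mult n X Y) E"
  unfolding comm_def by (metis mult_assoc)

lemma comm_sym: "comm n A B \<Longrightarrow> comm n B A"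
  unfolding comm_def by simp

lemma comm_id: "is_op n A \<Longrightarrow> comm n A (op_id n)"
  unfolding comm_def by (simp add: mult_id_left mult_id_right)



locale car =
  fixes n :: nat and c :: "nat \<Rightarrow> op"
  assumes isop: "\<And>i. i \<in> {1..n} \<Longrightarrow> is_op n (c i)"
    and car1: "\<forall>i\<in>{1..n}. \<forall>j\<in>{1..n}. anticomm n (c i) (c j) = op_zero"
    and car2: "\<forall>i\<in>{1..n}. \<forall>j\<in>{1..n}.
                   anticomm n (op_adj (c i)) (c j) = (if i = j then op_id n else op_zero)"
begin

lemma anti_from: assumes "anticomm n A B = op_zero" shows "op_mult n A B = (\<lambda>S T. - op_mult n B A S T)"
proof (intro ext)
  fix S T
  have "anticomm n A B S T = 0" using assms by (simp add: op_zero_def)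
  then show "op_mult n A B S T = - op_mult n B A S T" unfolding anticomm_def by (simp add: eq_neg_iff_add_eq_0)
qed

lemma cc: assumes i: "i \<in> {1..n}" shows "op_mult n (c i) (c i) = op_zero"
proof (intro ext)
  fix S T
  have "anticomm n (c i) (c i) S T = 0" using car1 i by (simp add: op_zero_def)
  then show "op_mult n (c i) (c i) S T = op_zero S T" unfolding anticomm_def op_zero_def by simp
qed

lemma dd: "i \<in> {1..n} \<Longrightarrow> op_mult n (op_adj (c i)) (op_adj (c i)) = op_zero"
  using cc by (metis adj_mult adj_zero)

lemma cd: assumes i: "i \<in> {1..n}" shows "op_mult n (c i) (op_adj (c i)) = (\<lambda>S T. op_id n S T - op_mult n (op_adj (c i)) (c i) S T)"
proof (intro ext)
  fix S T
  have "anticomm n (op_adj (c i)) (c i) S T = op_id n S T" using car2 i by simp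
  then show "op_mult n (c i) (op_adj (c i)) S T = op_id n S T - op_mult n (op_adj (c i)) (c i) S T"
    unfolding anticomm_def by (simp add: algebra_simps)
qed

lemma K1: assumes i: "i \<in> {1..n}" shows "op_mult n (op_adj (c i)) (op_mult n (c i) (op_adj (c i))) = op_adj (c i)"
proof -
  have "op_mult n (op_adj (c i)) (op_mult n (c i) (op_adj (c i))) =
     (\<lambda>S T. op_mult n (op_adj (c i)) (op_id n) S T - op_mult n (op_adj (c i)) (op_mult n (op_adj (c i)) (c i)) S T)"
    by (simp add: cd[OF i] mult_diff_right)
  also have "op_mult n (op_adj (c i)) (op_mult n (op_adj (c i)) (c i)) = op_zero"
    by (simp add: dd[OF i] flip: mult_assoc)
  also have "op_mult n (op_adj (c i)) (op_id n) = op_adj (c i)"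
    by (rule mult_id_right[OF is_op_adj[OF isop[OF i]]])
  finally show ?thesis by (simp add: op_zero_def)
qed

lemma K2: assumes i: "i \<in> {1..n}" shows "op_mult n (c i) (op_mult n (op_adj (c i)) (c i)) = c i"
proof -
  have "op_mult n (c i) (op_mult n (op_adj (c i)) (c i)) = op_mult n (op_mult n (c i) (op_adj (c i))) (c i)"
    by (simp add: mult_assoc)
  also have "\<dots> = (\<lambda>S T. op_mult n (op_id n) (c i) S T - op_mult n (op_mult n (op_adj (c i)) (c i)) (c i) S T)"
    by (simp add: cd[OF i] mult_diff_left)
  also have "op_mult n (op_mult n (op_adj (c i)) (c i)) (c i) = op_zero"
    by (simp add: cc[OF i] mult_assoc)
  also have "op_mult n (op_id n) (c i) = c i"
    by (rule mult_id_left[OF isop[OF i]])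
  finally show ?thesis by (simp add: op_zero_def)
qed

lemma cc': "i \<in> {1..n} \<Longrightarrow> op_mult n (c i) (op_mult n (c i) X) = op_zero"
  by (simp add: cc flip: mult_assoc)

lemma dd': "i \<in> {1..n} \<Longrightarrow> op_mult n (op_adj (c i)) (op_mult n (op_adj (c i)) X) = op_zero"
  by (simp add: dd flip: mult_assoc)

definition F :: "nat \<Rightarrow> op set" where "F i = {c i, op_adj (c i)}"

lemma odd_anti:
  assumes i: "i \<in> {1..n}" and j: "j \<in> {1..n}" and ij: "i \<noteq> j" and x: "x \<in> F i" and y: "y \<in> F j"
  shows "op_mult n x y = (\<lambda>S T. - op_mult n y x S T)"
proof -
  have 1: "op_mult n (c i) (c j) = (\<lambda>S T. - op_mult n (c j) (c i) S T)"
    using car1 i j by (intro anti_from) auto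
  have 2: "op_mult n (op_adj (c i)) (c j) = (\<lambda>S T. - op_mult n (c j) (op_adj (c i)) S T)"
    using car2 i j ij by (intro anti_from) auto
  have 3: "op_mult n (c i) (op_adj (c j)) = (\<lambda>S T. - op_mult n (op_adj (c j)) (c i) S T)"
  proof -
    have "op_mult n (op_adj (c j)) (c i) = (\<lambda>S T. - op_mult n (c i) (op_adj (c j)) S T)"
      using car2 i j ij by (intro anti_from) auto
    then show ?thesis by (auto intro!: ext dest!: fun_cong)
  qed
  have 4: "op_mult n (op_adj (c i)) (op_adj (c j)) = (\<lambda>S T. - op_mult n (op_adj (c j)) (op_adj (c i)) S T)"
  proof -
    have "op_mult n (c j) (c i) = (\<lambda>S T. - op_mult n (c i) (c j) S T)"
      using car1 i j by (intro anti_from) auto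
    then have "op_adj (op_mult n (c j) (c i)) = op_adj (\<lambda>S T. - op_mult n (c i) (c j) S T)" by simp
    then show ?thesis by (simp add: adj_mult adj_neg)
  qed
  show ?thesis using x y 1 2 3 4 unfolding F_def by auto
qed

lemma even_odd:
  assumes i: "i \<in> {1..n}" and j: "j \<in> {1..n}" and ij: "i \<noteq> j" and x: "x \<in> F i" and x': "x' \<in> F i" and y: "y \<in> F j"
  shows "comm n (op_mult n x x') y"
proof -
  have "op_mult n (op_mult n x x') y = op_mult n x (op_mult n x' y)" by (simp add: mult_assoc)
  also have "\<dots> = op_mult n x (\<lambda>S T. - op_mult n y x' S T)"
    using odd_anti[OF i j ij x' y] by simp
  also have "\<dots> = (\<lambda>S T. - op_mult n (op_mult n x y) x' S T)"
    by (simp add: mult_neg_right mult_assoc)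
  also have "op_mult n x y = (\<lambda>S T. - op_mult n y x S T)"
    using odd_anti[OF i j ij x y] by simp
  also have "(\<lambda>S T. - op_mult n (\<lambda>S T. - op_mult n y x S T) x' S T) = op_mult n (op_mult n y x) x'"
    by (simp add: mult_neg_left)
  finally show ?thesis unfolding comm_def by (simp add: mult_assoc)
qed

lemma isop_F: assumes i: "i \<in> {1..n}" and x: "x \<in> F i" shows "is_op n x"
proof -
  have "x = c i \<or> x = op_adj (c i)" using x unfolding F_def by simp
  then show ?thesis
  proof
    assume "x = c i" then show ?thesis using isop[OF i] by simp
  next
    assume "x = op_adj (c i)" then show ?thesis using is_op_adj[OF isop[OF i]] by simp
  qed
qed

lemma e_cases: "e_unit n (c i) a b \<in> F i \<or> (\<exists>x\<in>F i. \<exists>x'\<in>F i. e_unit n (c i) a b = op_mult n x x')"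
  unfolding e_unit_def F_def by auto

lemma e_diag: "\<exists>x\<in>F i. \<exists>x'\<in>F i. e_unit n (c i) a a = op_mult n x x'"
  unfolding e_unit_def F_def by auto

lemma is_op_e: assumes i: "i \<in> {1..n}" shows "is_op n (e_unit n (c i) a b)"
  using e_cases[of i a b]
proof
  assume "e_unit n (c i) a b \<in> F i" then show ?thesis by (rule isop_F[OF i])
next
  assume "\<exists>x\<in>F i. \<exists>x'\<in>F i. e_unit n (c i) a b = op_mult n x x'"
  then obtain x x' where "x \<in> F i" "x' \<in> F i" "e_unit n (c i) a b = op_mult n x x'" by (elim bexE)
  then show ?thesis using is_op_mult[OF isop_F[OF i] isop_F[OF i]] by simp
qed

lemma comm_e:
  assumes i: "i \<in> {1..n}" and j: "j \<in> {1..n}" and ij: "i \<noteq> j"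
  shows "comm n (e_unit n (c i) x x) (e_unit n (c j) a b)"
proof -
  obtain y y' where y: "y \<in> F i" "y' \<in> F i" and E: "e_unit n (c i) x x = op_mult n y y'"
    using e_diag[of i x] by (elim bexE)
  show ?thesis
    using e_cases[of j a b]
  proof
    assume "e_unit n (c j) a b \<in> F j" then show ?thesis
      using even_odd[OF i j ij y] E by simp
  next
    assume "\<exists>z\<in>F j. \<exists>z'\<in>F j. e_unit n (c j) a b = op_mult n z z'"
    then obtain z z' where z: "z \<in> F j" "z' \<in> F j" "e_unit n (c j) a b = op_mult n z z'" by blast
    show ?thesis using z E comm_mult even_odd[OF i j ij y z(1)] even_odd[OF i j ij y z(2)] by simp
  qed
qed

lemma e_adj: "op_adj (e_unit n (c i) a b) = e_unit n (c i) b a"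
proof -
  consider "a = 1 \<and> b = 1" | "a = 1 \<and> b = 2" | "a = 2 \<and> b = 1"
    | "\<not>(a = 1 \<and> b = 1) \<and> \<not>(a = 1 \<and> b = 2) \<and> \<not>(a = 2 \<and> b = 1)" by blast
  then show ?thesis
  proof cases
    case 1 then show ?thesis by (simp add: e_unit_def adj_mult)
  next
    case 2 then show ?thesis by (simp add: e_unit_def)
  next
    case 3 then show ?thesis by (simp add: e_unit_def)
  next
    case 4
    then have h1: "e_unit n (c i) a b = op_mult n (c i) (op_adj (c i))"
      unfolding e_unit_def by (simp only: if_False)
    from 4 have h: "\<not>(b = 1 \<and> a = 1) \<and> \<not>(b = 1 \<and> a = 2) \<and> \<not>(b = 2 \<and> a = 1)" by blast
    then have h2: "e_unit n (c i) b a = op_mult n (c i) (op_adj (c i))"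
      unfolding e_unit_def by (simp only: if_False)
    show ?thesis unfolding h1 h2 by (simp add: adj_mult)
  qed
qed

lemma fun_cong2: "(X::op) = Y \<Longrightarrow> X u v = Y u v" by simp

lemma ne12: "((1::nat) = 2) = False" "((2::nat) = 1) = False" by simp_all

lemma e11: "e_unit n C 1 1 = op_mult n (op_adj C) C" unfolding e_unit_def by simp
lemma e12: "e_unit n C 1 2 = op_adj C" unfolding e_unit_def by simp
lemma e21: "e_unit n C 2 1 = C" unfolding e_unit_def by simp
lemma e22: "e_unit n C 2 2 = op_mult n C (op_adj C)" unfolding e_unit_def by simp

lemma prods:
  assumes i: "i \<in> {1..n}"
  defines "d \<equiv> op_adj (c i)"
  shows "op_mult n (op_mult n d (c i)) (op_mult n d (c i)) = op_mult n d (c i)"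
    "op_mult n (op_mult n d (c i)) d = d"
    "op_mult n (op_mult n d (c i)) (c i) = op_zero"
    "op_mult n (op_mult n d (c i)) (op_mult n (c i) d) = op_zero"
    "op_mult n (op_mult n (c i) d) (op_mult n d (c i)) = op_zero"
    "op_mult n (op_mult n (c i) d) d = op_zero"
    "op_mult n (op_mult n (c i) d) (c i) = c i"
    "op_mult n (op_mult n (c i) d) (op_mult n (c i) d) = op_mult n (c i) d"
    "op_mult n d (op_mult n d (c i)) = op_zero"
    "op_mult n d (op_mult n (c i) d) = d"
    "op_mult n (c i) (op_mult n d (c i)) = c i"
    "op_mult n (c i) (op_mult n (c i) d) = op_zero"
    "op_mult n d d = op_zero"
    "op_mult n (c i) (c i) = op_zero"
  unfolding d_def
  by (simp_all only: mult_assoc mult_zero_right K1[OF i] K2[OF i] cc'[OF i] dd'[OF i] cc[OF i] dd[OF i])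

lemma E3: assumes i: "i \<in> {1..n}" and "x \<in> {1,2}" "a \<in> {1,2}" "b \<in> {1,2}"
  shows "op_mult n (e_unit n (c i) x x) (e_unit n (c i) a b) = (if x = a then e_unit n (c i) a b else op_zero)"
proof -
  have "x = 1 \<or> x = 2" "a = 1 \<or> a = 2" "b = 1 \<or> b = 2" using assms by auto
  then show ?thesis by (elim disjE) (simp_all only: e11 e12 e21 e22 prods[OF i] if_True if_False ne12 refl)
qed

lemma E4: assumes i: "i \<in> {1..n}" and "x \<in> {1,2}" "a \<in> {1,2}" "b \<in> {1,2}"
  shows "op_mult n (e_unit n (c i) a b) (e_unit n (c i) x x) = (if b = x then e_unit n (c i) a b else op_zero)"
proof -
  have "x = 1 \<or> x = 2" "a = 1 \<or> a = 2" "b = 1 \<or> b = 2" using assms by auto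
  then show ?thesis by (elim disjE) (simp_all only: e11 e12 e21 e22 prods[OF i] if_True if_False ne12 refl)
qed

lemma E5: assumes i: "i \<in> {1..n}" and "a \<in> {1,2}" "b \<in> {1,2}"
  shows "op_mult n (e_unit n (c i) b a) (e_unit n (c i) a b) = e_unit n (c i) b b"
proof -
  have "a = 1 \<or> a = 2" "b = 1 \<or> b = 2" using assms by auto
  then show ?thesis by (elim disjE) (simp_all only: e11 e12 e21 e22 prods[OF i])
qed

lemma E8: assumes i: "i \<in> {1..n}"
  shows "op_id n = (\<lambda>S T. e_unit n (c i) 1 1 S T + e_unit n (c i) 2 2 S T)"
proof (intro ext)
  fix S T
  have h1: "e_unit n (c i) 1 1 S T + e_unit n (c i) 2 2 S T
      = op_mult n (op_adj (c i)) (c i) S T + op_mult n (c i) (op_adj (c i)) S T"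
    by (simp only: e11 e22)
  have h2: "op_mult n (c i) (op_adj (c i)) S T = op_id n S T - op_mult n (op_adj (c i)) (c i) S T"
    using cd[OF i] by (rule fun_cong2)
  show "op_id n S T = e_unit n (c i) 1 1 S T + e_unit n (c i) 2 2 S T"
    unfolding h1 h2 by simp
qed

end


context car begin

definition PP :: "(nat \<Rightarrow> nat) \<Rightarrow> (nat \<Rightarrow> nat) \<Rightarrow> nat \<Rightarrow> op" where
  "PP \<alpha> \<beta> k = op_prod n (\<lambda>i. e_unit n (c i) (\<alpha> i) (\<beta> i)) k"

lemma PP_0: "PP \<alpha> \<beta> 0 = op_id n" unfolding PP_def by simp
lemma PP_Suc: "PP \<alpha> \<beta> (Suc k) = op_mult n (PP \<alpha> \<beta> k) (e_unit n (c (Suc k)) (\<alpha> (Suc k)) (\<beta> (Suc k)))"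
  unfolding PP_def by simp

lemma is_op_PP: "k \<le> n \<Longrightarrow> is_op n (PP \<alpha> \<beta> k)"
  by (induction k) (auto simp: PP_0 PP_Suc is_op_id is_op_mult is_op_e)

lemma comm_e_PP:
  assumes "k < j" "j \<le> n"
  shows "comm n (e_unit n (c j) x x) (PP \<alpha> \<beta> k)"
  using assms
proof (induction k)
  case 0 then show ?case by (simp add: PP_0 comm_id is_op_e)
next
  case (Suc k)
  then show ?case by (simp add: PP_Suc comm_mult comm_e)
qed

lemma comm_PP_diag:
  assumes "k < j" "j \<le> n"
  shows "comm n (PP \<beta> \<beta> k) (e_unit n (c j) a b)"
  using assms
proof (induction k)
  case 0 then show ?case by (simp add: PP_0 comm_sym[OF comm_id] is_op_e)
next
  case (Suc k)
  then show ?case by (simp add: PP_Suc comm_mult2 comm_e)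
qed

definition valid :: "(nat \<Rightarrow> nat) \<Rightarrow> bool" where
  "valid \<alpha> \<longleftrightarrow> (\<forall>i\<in>{1..n}. \<alpha> i \<in> {1,2})"

lemma PL_left:
  assumes "valid \<alpha>" "valid \<beta>" "k \<le> n" "j \<in> {1..k}" "x \<in> {1,2}"
  shows "op_mult n (e_unit n (c j) x x) (PP \<alpha> \<beta> k) = (if x = \<alpha> j then PP \<alpha> \<beta> k else op_zero)"
  using assms
proof (induction k)
  case 0 then show ?case by simp
next
  case (Suc k)
  show ?case
  proof (cases "j = Suc k")
    case True
    have v: "\<alpha> j \<in> {1,2}" "\<beta> j \<in> {1,2}" using Suc.prems unfolding valid_def by auto
    have "op_mult n (e_unit n (c j) x x) (PP \<alpha> \<beta> (Suc k)) =
       op_mult n (PP \<alpha> \<beta> k) (op_mult n (e_unit n (c j) x x) (e_unit n (c j) (\<alpha> j) (\<beta> j)))"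
      using comm_e_PP[of k j x \<alpha> \<beta>] Suc.prems True unfolding comm_def
      by (simp add: PP_Suc flip: mult_assoc)
    also have "\<dots> = (if x = \<alpha> j then PP \<alpha> \<beta> (Suc k) else op_zero)"
      using E3[of j x "\<alpha> j" "\<beta> j"] v Suc.prems True by (simp add: PP_Suc)
    finally show ?thesis .
  next
    case False
    then show ?thesis using Suc by (auto simp: PP_Suc simp flip: mult_assoc)
  qed
qed

lemma PL_right:
  assumes "valid \<alpha>" "valid \<beta>" "k \<le> n" "j \<in> {1..k}" "x \<in> {1,2}"
  shows "op_mult n (PP \<alpha> \<beta> k) (e_unit n (c j) x x) = (if x = \<beta> j then PP \<alpha> \<beta> k else op_zero)"
  using assms
proof (induction k)
  case 0 then show ?case by simp
next
  case (Suc k)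
  have v: "\<alpha> (Suc k) \<in> {1,2}" "\<beta> (Suc k) \<in> {1,2}" using Suc.prems unfolding valid_def by auto
  show ?case
  proof (cases "j = Suc k")
    case True
    then show ?thesis
      using E4[of j x "\<alpha> j" "\<beta> j"] v Suc.prems by (auto simp: PP_Suc mult_assoc)
  next
    case False
    have c: "comm n (e_unit n (c j) x x) (e_unit n (c (Suc k)) (\<alpha> (Suc k)) (\<beta> (Suc k)))"
      using False Suc.prems by (intro comm_e) auto
    have "op_mult n (PP \<alpha> \<beta> (Suc k)) (e_unit n (c j) x x) =
      op_mult n (op_mult n (PP \<alpha> \<beta> k) (e_unit n (c j) x x)) (e_unit n (c (Suc k)) (\<alpha> (Suc k)) (\<beta> (Suc k)))"
      using c unfolding comm_def by (simp add: PP_Suc mult_assoc)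
    then show ?thesis using Suc False by (auto simp: PP_Suc)
  qed
qed

lemma PL_diag:
  assumes "valid \<alpha>" "valid \<beta>" "k \<le> n"
  shows "op_mult n (op_adj (PP \<alpha> \<beta> k)) (PP \<alpha> \<beta> k) = PP \<beta> \<beta> k"
  using assms
proof (induction k)
  case 0 then show ?case by (simp add: PP_0 mult_id_left is_op_id)
next
  case (Suc k)
  let ?j = "Suc k"
  have v: "\<alpha> ?j \<in> {1,2}" "\<beta> ?j \<in> {1,2}" using Suc.prems unfolding valid_def by auto
  let ?eab = "e_unit n (c ?j) (\<alpha> ?j) (\<beta> ?j)" and ?eba = "e_unit n (c ?j) (\<beta> ?j) (\<alpha> ?j)"
  have "op_mult n (op_adj (PP \<alpha> \<beta> ?j)) (PP \<alpha> \<beta> ?j)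
      = op_mult n ?eba (op_mult n (op_mult n (op_adj (PP \<alpha> \<beta> k)) (PP \<alpha> \<beta> k)) ?eab)"
    by (simp add: PP_Suc adj_mult e_adj mult_assoc)
  also have "\<dots> = op_mult n ?eba (op_mult n (PP \<beta> \<beta> k) ?eab)" using Suc by simp
  also have "\<dots> = op_mult n (PP \<beta> \<beta> k) (op_mult n ?eba ?eab)"
    using comm_PP_diag[of k ?j \<beta> "\<beta> ?j" "\<alpha> ?j"] Suc.prems unfolding comm_def
    by (simp flip: mult_assoc)
  also have "\<dots> = PP \<beta> \<beta> ?j" using E5[of ?j "\<alpha> ?j" "\<beta> ?j"] v Suc.prems by (simp add: PP_Suc)
  finally show ?case .
qed

lemma tr_PP_diag:
  assumes "valid \<beta>" "k \<le> n"
  shows "tr n (PP \<beta> \<beta> k) = 2 ^ n / 2 ^ k"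
  using assms
proof (induction k)
  case 0 then show ?case by (simp add: PP_0 tr_id)
next
  case (Suc k)
  let ?j = "Suc k"
  have j: "?j \<in> {1..n}" using Suc.prems by auto
  let ?D = "PP \<beta> \<beta> k"
  let ?e = "\<lambda>a b. e_unit n (c ?j) a b"
  have Dc: "comm n ?D (?e a b)" for a b using comm_PP_diag Suc.prems by simp
  have "?e 2 2 = op_mult n (?e 2 1) (op_mult n (?e 1 1) (?e 1 2))"
    using E4[OF j, of 1 2 1] E5[OF j, of 1 2] by (simp flip: mult_assoc)
  then have "tr n (op_mult n ?D (?e 2 2)) = tr n (op_mult n (?e 2 1) (op_mult n ?D (op_mult n (?e 1 1) (?e 1 2))))"
    using Dc[of 2 1] unfolding comm_def by (simp flip: mult_assoc)
  also have "\<dots> = tr n (op_mult n (op_mult n ?D (op_mult n (?e 1 1) (?e 1 2))) (?e 2 1))"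
    by (rule tr_comm)
  also have "\<dots> = tr n (op_mult n ?D (op_mult n (?e 1 1) (op_mult n (?e 1 2) (?e 2 1))))"
    by (simp add: mult_assoc)
  also have "\<dots> = tr n (op_mult n ?D (?e 1 1))"
    using E5[OF j, of 2 1] E3[OF j, of 1 1 1] by simp
  finally have eq: "tr n (op_mult n ?D (?e 2 2)) = tr n (op_mult n ?D (?e 1 1))" .
  have "tr n ?D = tr n (op_mult n ?D (op_id n))"
    using is_op_PP Suc.prems by (simp add: mult_id_right)
  also have "\<dots> = tr n (op_mult n ?D (?e 1 1)) + tr n (op_mult n ?D (?e 2 2))"
    by (simp add: E8[OF j] mult_add_right tr_add)
  finally have sum: "tr n ?D = tr n (op_mult n ?D (?e 1 1)) + tr n (op_mult n ?D (?e 2 2))" .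
  have IH: "tr n ?D = 2 ^ n / 2 ^ k" using Suc by simp
  have "\<beta> ?j \<in> {1,2}" using Suc.prems unfolding valid_def by auto
  then have "tr n (PP \<beta> \<beta> ?j) = tr n (op_mult n ?D (?e 1 1)) \<or> tr n (PP \<beta> \<beta> ?j) = tr n (op_mult n ?D (?e 2 2))"
    by (auto simp: PP_Suc)
  then show ?case using eq sum IH by (auto simp: field_simps)
qed

end


lemma tr_inner: "tr n (op_mult n (op_adj A) B) = (\<Sum>x\<in>Pow {1..n} \<times> Pow {1..n}. cnj (A (fst x) (snd x)) * B (fst x) (snd x))"
  unfolding tr_def op_mult_def op_adj_def
  by (subst sum.swap) (simp add: sum.cartesian_product split_beta)

lemma span_lemma:
  fixes P :: "'p \<Rightarrow> op" and I :: "'p set"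
  assumes fin: "finite I" and cardI: "card I = card (Pow {1..n} \<times> Pow {1..(n::nat)})"
    and isop: "\<forall>p\<in>I. is_op n (P p)"
    and ortho: "\<forall>p\<in>I. \<forall>q\<in>I. tr n (op_mult n (op_adj (P p)) (P q)) = (if p = q then 1 else 0)"
    and A: "is_op n A"
  shows "\<exists>a. A = (\<lambda>S T. \<Sum>p\<in>I. a p * P p S T)"
proof -
  define X where "X = Pow {1..n} \<times> Pow {1..n}"
  define N where "N = card I"
  have finX: "finite X" unfolding X_def by auto
  obtain g where g: "bij_betw g {0..<N} I" using ex_bij_betw_nat_finite[OF fin] N_def by blast
  obtain h where h: "bij_betw h {0..<N} X" using ex_bij_betw_nat_finite[OF finX] cardI N_def X_def by metis
  define Q where "Q p x = P p (fst x) (snd x)" for p x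
  have orthoQ: "(\<Sum>x\<in>X. cnj (Q q x) * Q p x) = (if q = p then 1 else 0)" if "p \<in> I" "q \<in> I" for p q
    using ortho that unfolding Q_def X_def by (simp add: tr_inner)
  define V where "V = mat N N (\<lambda>(i,j). Q (g i) (h j))"
  define W where "W = mat N N (\<lambda>(i,j). cnj (Q (g j) (h i)))"
  have V: "V \<in> carrier_mat N N" and W: "W \<in> carrier_mat N N" unfolding V_def W_def by auto
  have "V * W = 1\<^sub>m N"
  proof (rule eq_matI)
    fix i k assume ik: "i < dim_row (1\<^sub>m N)" "k < dim_col (1\<^sub>m N)"
    then have ik': "i < N" "k < N" by auto
    have "(V * W) $$ (i, k) = (\<Sum>j<N. Q (g i) (h j) * cnj (Q (g k) (h j)))"
      using ik' unfolding V_def W_def by (simp add: scalar_prod_def lessThan_atLeast0)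
    also have "\<dots> = (\<Sum>x\<in>X. cnj (Q (g k) x) * Q (g i) x)"
      using sum.reindex_bij_betw[OF h, of "\<lambda>x. cnj (Q (g k) x) * Q (g i) x"]
      by (simp add: lessThan_atLeast0 mult.commute)
    also have "\<dots> = (if g k = g i then 1 else 0)"
      using orthoQ g ik' by (simp add: bij_betw_apply)
    also have "\<dots> = 1\<^sub>m N $$ (i, k)"
      using ik' g by (auto simp: bij_betw_def inj_on_def)
    finally show "(V * W) $$ (i, k) = 1\<^sub>m N $$ (i, k)" .
  qed (auto simp: V_def W_def)
  then have WV: "W * V = 1\<^sub>m N" using mat_mult_left_right_inverse[OF V W] by blast
  have compl: "(\<Sum>p\<in>I. cnj (Q p x) * Q p y) = (if x = y then 1 else 0)" if "x \<in> X" "y \<in> X" for x y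
  proof -
    have hs: "h ` {0..<N} = X" using bij_betw_imp_surj_on[OF h] .
    from that(1) hs obtain j where j0: "j \<in> {0..<N}" "x = h j" by blast
    from that(2) hs obtain l where l0: "l \<in> {0..<N}" "y = h l" by blast
    have j: "j < N" "h j = x" using j0 by auto
    have l: "l < N" "h l = y" using l0 by auto
    have "(\<Sum>p\<in>I. cnj (Q p x) * Q p y) = (\<Sum>i<N. cnj (Q (g i) (h j)) * Q (g i) (h l))"
      using sum.reindex_bij_betw[OF g, of "\<lambda>p. cnj (Q p x) * Q p y"] j l
      by (simp add: lessThan_atLeast0)
    also have "\<dots> = (W * V) $$ (j, l)"
      using j l unfolding V_def W_def by (simp add: scalar_prod_def lessThan_atLeast0)
    also have "\<dots> = (if j = l then 1 else 0)" using WV j l by simp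
    also have "\<dots> = (if x = y then 1 else 0)"
      using j l h by (auto simp: bij_betw_def inj_on_def)
    finally show ?thesis .
  qed
  define a where "a p = (\<Sum>x\<in>X. cnj (Q p x) * A (fst x) (snd x))" for p
  have "A = (\<lambda>S T. \<Sum>p\<in>I. a p * P p S T)"
  proof (intro ext)
    fix S T
    show "A S T = (\<Sum>p\<in>I. a p * P p S T)"
    proof (cases "(S, T) \<in> X")
      case True
      have "(\<Sum>p\<in>I. a p * P p S T) = (\<Sum>p\<in>I. \<Sum>x\<in>X. A (fst x) (snd x) * (cnj (Q p x) * Q p (S, T)))"
        unfolding a_def Q_def by (simp add: sum_distrib_left sum_distrib_right mult_ac)
      also have "\<dots> = (\<Sum>x\<in>X. A (fst x) (snd x) * (\<Sum>p\<in>I. cnj (Q p x) * Q p (S, T)))"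
        by (subst sum.swap) (simp add: sum_distrib_left)
      also have "\<dots> = (\<Sum>x\<in>X. if x = (S, T) then A S T else 0)"
        using True compl by (intro sum.cong) auto
      also have "\<dots> = A S T" using True finX by simp
      finally show ?thesis by simp
    next
      case False
      then have nS: "\<not> (S \<subseteq> {1..n} \<and> T \<subseteq> {1..n})" unfolding X_def by auto
      then have "A S T = 0" using A unfolding is_op_def by blast
      moreover have "P p S T = 0" if "p \<in> I" for p
        using isop that nS unfolding is_op_def by blast
      ultimately show ?thesis by simp
    qed
  qed
  then show ?thesis by blast
qed



context car begin

lemma PP_cong: "(\<forall>i\<in>{1..k}. \<alpha> i = \<gamma> i \<and> \<beta> i = \<delta> i) \<Longrightarrow> PP \<alpha> \<beta> k = PP \<gamma> \<delta> k"
  by (induction k) (auto simp: PP_0 PP_Suc)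

lemma ortho:
  assumes va: "valid \<alpha>" and vb: "valid \<beta>" and vc: "valid \<gamma>" and vd: "valid \<delta>"
  shows "tr n (op_mult n (op_adj (PP \<alpha> \<beta> n)) (PP \<gamma> \<delta> n)) = (if (\<forall>i\<in>{1..n}. \<alpha> i = \<gamma> i \<and> \<beta> i = \<delta> i) then 1 else 0)"
proof (cases "\<forall>i\<in>{1..n}. \<alpha> i = \<gamma> i \<and> \<beta> i = \<delta> i")
  case True
  then have "PP \<gamma> \<delta> n = PP \<alpha> \<beta> n" by (metis PP_cong)
  then show ?thesis using True PL_diag[OF va vb] tr_PP_diag[OF vb] by simp
next
  case False
  let ?P = "PP \<alpha> \<beta> n" and ?Q = "PP \<gamma> \<delta> n"
  from False obtain j where j: "j \<in> {1..n}" and ne: "\<alpha> j \<noteq> \<gamma> j \<or> \<beta> j \<noteq> \<delta> j" by blast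
  have "tr n (op_mult n (op_adj ?P) ?Q) = 0"
  proof (cases "\<alpha> j \<noteq> \<gamma> j")
    case True
    let ?E = "e_unit n (c j) (\<alpha> j) (\<alpha> j)"
    have x: "\<alpha> j \<in> {1,2}" using va j unfolding valid_def by auto
    have 1: "op_mult n ?E ?P = ?P" using PL_left[OF va vb _ j x] by simp
    have 2: "op_mult n ?E ?Q = op_zero" using PL_left[OF vc vd _ j x] True by simp
    have "tr n (op_mult n (op_adj ?P) ?Q) = tr n (op_mult n (op_adj (op_mult n ?E ?P)) ?Q)" using 1 by simp
    also have "\<dots> = tr n (op_mult n (op_adj ?P) (op_mult n ?E ?Q))"
      by (simp add: adj_mult e_adj mult_assoc)
    also have "\<dots> = 0" using 2 by simp
    finally show ?thesis .
  next
    case False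
    then have ne2: "\<beta> j \<noteq> \<delta> j" using ne by blast
    let ?E = "e_unit n (c j) (\<beta> j) (\<beta> j)"
    have x: "\<beta> j \<in> {1,2}" using vb j unfolding valid_def by auto
    have 1: "op_mult n ?P ?E = ?P" using PL_right[OF va vb _ j x] by simp
    have 2: "op_mult n ?Q ?E = op_zero" using PL_right[OF vc vd _ j x] ne2 by simp
    have "tr n (op_mult n (op_adj ?P) ?Q) = tr n (op_mult n (op_adj (op_mult n ?P ?E)) ?Q)" using 1 by simp
    also have "\<dots> = tr n (op_mult n ?E (op_mult n (op_adj ?P) ?Q))"
      by (simp add: adj_mult e_adj mult_assoc)
    also have "\<dots> = tr n (op_mult n (op_mult n (op_adj ?P) ?Q) ?E)" by (rule tr_comm)
    also have "\<dots> = 0" using 2 by (simp add: mult_assoc)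
    finally show ?thesis .
  qed
  then show ?thesis using False by simp
qed

end

theorem lemma4:
  fixes n :: nat and f :: "nat \<Rightarrow> (nat \<Rightarrow> complex) \<times> (nat \<Rightarrow> complex)"
  defines "c \<equiv> (\<lambda>i. Bf n (f i))"
  defines "P \<equiv> (\<lambda>(\<alpha>, \<beta>). op_prod n (\<lambda>i. e_unit n (c i) (\<alpha> i) (\<beta> i)) n)"
  defines "I \<equiv> ({1..n} \<rightarrow>\<^sub>E {1,2::nat}) \<times> ({1..n} \<rightarrow>\<^sub>E {1,2::nat})"
  assumes car1: "\<forall>i\<in>{1..n}. \<forall>j\<in>{1..n}. anticomm n (c i) (c j) = op_zero"
      and car2: "\<forall>i\<in>{1..n}. \<forall>j\<in>{1..n}.
                   anticomm n (op_adj (c i)) (c j) = (if i = j then op_id n else op_zero)"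
  shows "(\<forall>p\<in>I. \<forall>q\<in>I. tr n (op_mult n (op_adj (P p)) (P q)) = (if p = q then 1 else 0))
       \<and> (\<forall>A. is_op n A \<longrightarrow> (\<exists>a. A = (\<lambda>S T. \<Sum>p\<in>I. a p * P p S T)))"
proof -
  have isc: "is_op n (c i)" for i unfolding c_def by (rule is_op_Bf)
  have "car n c" apply (rule car.intro) using isc car1 car2 by auto
  then interpret car n c .
  have P_eq: "P p = PP (fst p) (snd p) n" for p
    unfolding P_def PP_def by (simp add: split_beta)
  have val: "valid (fst p) \<and> valid (snd p)" if "p \<in> I" for p
    using that unfolding I_def valid_def by (auto simp: PiE_iff mem_Times_iff)
  have eqiff: "(p = q) \<longleftrightarrow> (\<forall>i\<in>{1..n}. fst p i = fst q i \<and> snd p i = snd q i)" if "p \<in> I" "q \<in> I" for p q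
  proof
    assume "\<forall>i\<in>{1..n}. fst p i = fst q i \<and> snd p i = snd q i"
    moreover have "fst p \<in> {1..n} \<rightarrow>\<^sub>E {1,2}" "fst q \<in> {1..n} \<rightarrow>\<^sub>E {1,2}"
       "snd p \<in> {1..n} \<rightarrow>\<^sub>E {1,2}" "snd q \<in> {1..n} \<rightarrow>\<^sub>E {1,2}"
      using that unfolding I_def by (auto simp: mem_Times_iff)
    ultimately have "fst p = fst q" "snd p = snd q" by (auto intro: PiE_ext)
    then show "p = q" by (simp add: prod_eq_iff)
  qed simp
  have orth: "\<forall>p\<in>I. \<forall>q\<in>I. tr n (op_mult n (op_adj (P p)) (P q)) = (if p = q then 1 else 0)"
    using ortho val eqiff by (simp add: P_eq)
  have isopP: "\<forall>p\<in>I. is_op n (P p)" by (simp add: P_eq is_op_PP)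
  have cardI: "card I = card (Pow {1..n} \<times> Pow {1..n})"
    unfolding I_def by (simp add: card_cartesian_product card_PiE card_Pow numeral_2_eq_2)
  have finI: "finite I" unfolding I_def by (simp add: finite_PiE)
  show ?thesis using orth span_lemma[OF finI cardI isopP orth] by blast
qed


end
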